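(* Let $X := (0,\infty)$ and let $g : X \to X$ be continuous and strictly increasing with $g(x) < x$ for all $x>0$. Then the following statements are equivalent. (i) The functions $g$ and $\mathrm{id}-g$ (i.e. $x \mapsto x - g(x)$) admit a common Abel function. (ii) The functions $g$ and $\mathrm{id}-g$ commute, i.e. $g(x - g(x)) = g(x) - g(g(x))$ for all $x>0$. (iii) For all $x>0$, $g(x) = g(x - g(x)) + g(g(x))$.
   Context: An Abel function of a map $\phi : X \to X$ is a homeomorphism $\alpha : X \to \mathbb{R}$ for which there is a constant $c$ with $\alpha(\phi(x)) = \alpha(x) + c$ for all $x > 0$. A common Abel function of $g$ and $\mathrm{id}-g$ is a single such $\alpha$ that is an Abel function of both (with possibly different constants). *)

theory Defs
  imports "HOL-Analysis.Analysis"
begin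

definition abel_function :: "(real \<Rightarrow> real) \<Rightarrow> (real \<Rightarrow> real) \<Rightarrow> bool" where
  "abel_function \<alpha> \<phi> \<longleftrightarrow>
     (\<exists>\<beta>. homeomorphism {0<..} (UNIV :: real set) \<alpha> \<beta>) \<and>
     (\<exists>c. \<forall>x>0. \<alpha> (\<phi> x) = \<alpha> x + c)"

definition common_abel_function :: "(real \<Rightarrow> real) \<Rightarrow> (real \<Rightarrow> real) \<Rightarrow> bool" where
  "common_abel_function \<phi> \<psi> \<longleftrightarrow> (\<exists>\<alpha>. abel_function \<alpha> \<phi> \<and> abel_function \<alpha> \<psi>)"

end

theory Submission
  imports Defs
begin

locale cpair =
  fixes G H :: "real \<Rightarrow> real"
  assumes Gpos: "\<And>y. y > 0 \<Longrightarrow> G y > 0"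
    and Hpos: "\<And>y. y > 0 \<Longrightarrow> H y > 0"
    and GH_sum: "\<And>y. y > 0 \<Longrightarrow> G y + H y = y"
    and GH_comm: "\<And>y. y > 0 \<Longrightarrow> G (H y) = H (G y)"
begin

lemma swap: "cpair H G"
  by unfold_locales (auto simp: Gpos Hpos GH_comm add.commute GH_sum)

lemma harm: "y > 0 \<Longrightarrow> G (H y) + G (G y) = G y"
  using GH_comm[of y] GH_sum[of "G y"] Gpos[of y] by simp

primrec W :: "nat \<Rightarrow> (nat \<Rightarrow> real) \<Rightarrow> real \<Rightarrow> real" where
  "W 0 f y = f 0 * y"
| "W (Suc n) f y = W n (\<lambda>c. f (Suc c)) (G y) + W n f (H y)"

lemma W_add: "W n (\<lambda>c. f c + k c) y = W n f y + W n k y"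
  by (induction n arbitrary: f k y) (auto simp: algebra_simps)

lemma W_scale: "W n (\<lambda>c. a * f c) y = a * W n f y"
  by (induction n arbitrary: f y) (auto simp: algebra_simps)

lemma W_const: "y > 0 \<Longrightarrow> W n (\<lambda>c. a) y = a * y"
proof (induction n arbitrary: y)
  case 0 then show ?case by simp
next
  case (Suc n)
  then show ?case using Gpos[of y] Hpos[of y] GH_sum[of y]
    by (simp add: distrib_left[symmetric])
qed

lemma W_nonneg: "y > 0 \<Longrightarrow> (\<And>c. f c \<ge> 0) \<Longrightarrow> W n f y \<ge> 0"
proof (induction n arbitrary: f y)
  case 0 then show ?case by simp
next
  case (Suc n)
  then show ?case using Gpos[of y] Hpos[of y] by simp
qed

lemma W_id: "y > 0 \<Longrightarrow> W n (\<lambda>c. real c) y = real n * G y"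
proof (induction n arbitrary: y)
  case 0 then show ?case by simp
next
  case (Suc n)
  have "W (Suc n) (\<lambda>c. real c) y = W n (\<lambda>c. 1 + real c) (G y) + W n (\<lambda>c. real c) (H y)"
    by (simp only: W.simps of_nat_Suc)
  also have "\<dots> = real n * G (G y) + G y + real n * G (H y)"
    using W_add[of n "\<lambda>c. 1" "\<lambda>c. real c" "G y"] W_const[of "G y" n 1] Suc Gpos[of y] Hpos[of y]
    by simp
  also have "\<dots> = real (Suc n) * G y"
  proof -
    have "real n * G (G y) + real n * G (H y) = real n * G y"
      using harm[OF Suc.prems] by (metis distrib_left add.commute)
    then show ?thesis by (simp add: algebra_simps)
  qed
  finally show ?case .
qed

lemma W_sq: "y > 0 \<Longrightarrow> W n (\<lambda>c. real c * (real c - 1)) y = real n * (real n - 1) * G (G y)"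
proof (induction n arbitrary: y)
  case 0 then show ?case by simp
next
  case (Suc n)
  define f :: "nat \<Rightarrow> real" where "f = (\<lambda>c. real c * (real c - 1))"
  have e: "(\<lambda>c. f (Suc c)) = (\<lambda>c. f c + 2 * real c)"
    by (auto simp: f_def algebra_simps)
  have "W (Suc n) f y = W n (\<lambda>c. f (Suc c)) (G y) + W n f (H y)"
    by (rule W.simps(2))
  also have "\<dots> = W n (\<lambda>c. f c + 2 * real c) (G y) + W n f (H y)"
    by (simp only: e)
  also have "\<dots> = W n f (G y) + 2 * W n real (G y) + W n f (H y)"
    by (simp only: W_add W_scale)
  also have "\<dots> = real n * (real n - 1) * G (G (G y)) + 2 * (real n * G (G y))
       + real n * (real n - 1) * G (G (H y))"
    using W_id[of "G y" n] Suc.IH[of "G y"] Suc.IH[of "H y"] Gpos[of y] Hpos[of y] Suc.prems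
    unfolding f_def by simp
  also have "\<dots> = real (Suc n) * (real (Suc n) - 1) * G (G y)"
  proof -
    have "G (G (G y)) + G (G (H y)) = G (G y)"
      using harm[of "G y"] GH_comm[of y] Gpos[of y] Suc.prems by (simp add: add.commute)
    then have "real n * (real n - 1) * G (G (G y)) + real n * (real n - 1) * G (G (H y))
       = real n * (real n - 1) * G (G y)" by (metis distrib_left)
    then show ?thesis by (simp add: algebra_simps)
  qed
  finally show ?case unfolding f_def .
qed

lemma logconv: assumes y: "y > 0" shows "(G y)^2 \<le> G (G y) * y"
proof (rule ccontr)
  assume "\<not> ?thesis"
  then have D: "(G y)^2 - G (G y) * y > 0" by simp
  define n where "n = nat (ceiling (G y * y / ((G y)^2 - G (G y) * y))) + 1"
  have nbig: "real n > G y * y / ((G y)^2 - G (G y) * y)"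
    unfolding n_def by linarith
  have "W n (\<lambda>c. (real c * y - real n * G y)^2) y \<ge> 0"
    by (rule W_nonneg[OF y]) simp
  moreover have "(\<lambda>c. (real c * y - real n * G y)^2) =
     (\<lambda>c. (y^2) * (real c * (real c - 1)) + ((y^2 - 2 * real n * G y * y) * real c + (real n * G y)^2))"
    by (auto simp: power2_eq_square algebra_simps)
  ultimately have "0 \<le> (y^2) * (real n * (real n - 1) * G (G y)) +
      ((y^2 - 2 * real n * G y * y) * (real n * G y) + (real n * G y)^2 * y)"
    using W_add W_scale W_sq[OF y] W_id[OF y] W_const[OF y] by simp
  then have "0 \<le> real n * y * (y * (real n - 1) * G (G y) + y * G y - real n * (G y)^2)"
    by (simp add: power2_eq_square algebra_simps)
  moreover have "real n * y > 0" using y unfolding n_def by simp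
  ultimately have "0 \<le> y * (real n - 1) * G (G y) + y * G y - real n * (G y)^2"
    using mult_pos_neg[of "real n * y" "y * (real n - 1) * G (G y) + y * G y - real n * (G y)^2"]
    by linarith
  moreover have "y * (real n - 1) * G (G y) + y * G y - real n * (G y)^2
     = (G y * y - G (G y) * y) - real n * ((G y)^2 - G (G y) * y)"
    by (simp add: algebra_simps power2_eq_square)
  moreover have "G y * y < real n * ((G y)^2 - G (G y) * y)"
    using nbig D by (simp add: pos_divide_less_eq)
  moreover have "G (G y) * y > 0" using y Gpos by simp
  ultimately show False by linarith
qed

end

context cpair begin

definition rG :: "real \<Rightarrow> real" where "rG y = G y / y"

lemma G_less: "y > 0 \<Longrightarrow> G y < y"
  using GH_sum[of y] Hpos[of y] by linarith

lemma rG_pos: "y > 0 \<Longrightarrow> 0 < rG y"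
  using Gpos[of y] by (simp add: rG_def)

lemma rG_less1: "y > 0 \<Longrightarrow> rG y < 1"
  using G_less[of y] by (simp add: rG_def)

lemma G_eq: "y > 0 \<Longrightarrow> G y = rG y * y"
  by (simp add: rG_def)

lemma funpow_G_pos: "y > 0 \<Longrightarrow> (G ^^ k) y > 0"
  by (induction k) (auto simp: Gpos)

lemma funpow_H_pos: "y > 0 \<Longrightarrow> (H ^^ k) y > 0"
  by (induction k) (auto simp: Hpos)

lemma G_funpowH: "y > 0 \<Longrightarrow> G ((H ^^ m) y) = (H ^^ m) (G y)"
proof (induction m)
  case 0 then show ?case by simp
next
  case (Suc m)
  then show ?case using GH_comm[of "(H ^^ m) y"] funpow_H_pos[of y m] by simp
qed

lemma funpow_comm: "y > 0 \<Longrightarrow> (G ^^ k) ((H ^^ m) y) = (H ^^ m) ((G ^^ k) y)"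
proof (induction k)
  case 0 then show ?case by simp
next
  case (Suc k)
  then show ?case using G_funpowH[of "(G ^^ k) y" m] funpow_G_pos[of y k] by simp
qed

lemma mixed_pos: "y > 0 \<Longrightarrow> (G ^^ k) ((H ^^ m) y) > 0"
  using funpow_G_pos funpow_H_pos by blast

lemma H_mixed: "y > 0 \<Longrightarrow> H ((G ^^ i) ((H ^^ m) y)) = (G ^^ i) ((H ^^ Suc m) y)"
  using funpow_comm[of y i m] funpow_comm[of y i "Suc m"] by simp

lemma funpow_G_le: "y > 0 \<Longrightarrow> (G ^^ k) y \<le> y"
proof (induction k)
  case 0 then show ?case by simp
next
  case (Suc k)
  then show ?case using G_less[of "(G ^^ k) y"] funpow_G_pos[of y k] by simp
qed

lemma prod_formula: "y > 0 \<Longrightarrow> (G ^^ p) y = y * (\<Prod>i<p. rG ((G ^^ i) y))"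
proof (induction p)
  case 0 then show ?case by simp
next
  case (Suc p)
  have "(G ^^ Suc p) y = rG ((G ^^ p) y) * (G ^^ p) y"
    using G_eq[of "(G ^^ p) y"] funpow_G_pos[OF Suc.prems, of p] by simp
  then show ?case using Suc by (simp add: algebra_simps)
qed

lemma ratio_formula: "y > 0 \<Longrightarrow> (G ^^ p) y / y = (\<Prod>i<p. rG ((G ^^ i) y))"
  using prod_formula by simp

lemma rG_G: assumes v: "v > 0" shows "rG (G v) = 1 - rG (H v) * (1 - rG v) / rG v"
proof -
  have a: "G (G v) = G v - G (H v)" using harm[OF v] by simp
  have b: "1 - rG v = H v / v" using GH_sum[OF v] v by (simp add: rG_def field_simps)
  have c: "rG (H v) * (1 - rG v) / rG v = G (H v) / G v"
    using v Gpos[OF v] Hpos[OF v] unfolding b by (simp add: rG_def field_simps)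
  show ?thesis using Gpos[OF v] unfolding c by (simp add: rG_def a diff_divide_distrib)
qed

lemma rG_mono: assumes y: "y > 0" shows "rG y \<le> rG (G y)"
proof -
  have "(G y)^2 \<le> G (G y) * y" by (rule logconv[OF y])
  then show ?thesis using y Gpos[OF y] by (simp add: rG_def field_simps power2_eq_square)
qed

lemma rG_incseq: "y > 0 \<Longrightarrow> incseq (\<lambda>j. rG ((G ^^ j) y))"
  by (rule incseq_SucI) (use rG_mono funpow_G_pos in simp)

lemma cross_lim:
  assumes y: "y > 0" and lim: "(\<lambda>m. rG ((H ^^ m) y)) \<longlonglongrightarrow> M" and M: "M > 0"
  shows "(\<lambda>m. rG ((G ^^ i) ((H ^^ m) y))) \<longlonglongrightarrow> M"
proof (induction i)
  case 0 then show ?case using lim by simp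
next
  case (Suc i)
  define v where "v m = (G ^^ i) ((H ^^ m) y)" for m
  have vpos: "v m > 0" for m unfolding v_def using mixed_pos[OF y] .
  have IH: "(\<lambda>m. rG (v m)) \<longlonglongrightarrow> M" using Suc unfolding v_def .
  have "(\<lambda>m. rG (v (Suc m))) \<longlonglongrightarrow> M" using LIMSEQ_Suc[OF IH] .
  then have H: "(\<lambda>m. rG (H (v m))) \<longlonglongrightarrow> M" unfolding v_def using H_mixed[OF y] by simp
  have "(\<lambda>m. 1 - rG (H (v m)) * (1 - rG (v m)) / rG (v m)) \<longlonglongrightarrow> 1 - M * (1 - M) / M"
    by (intro tendsto_intros H IH) (use M in simp)
  moreover have "1 - M * (1 - M) / M = M" using M by (simp add: field_simps)
  ultimately have "(\<lambda>m. rG (G (v m))) \<longlonglongrightarrow> M" using rG_G[OF vpos] by simp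
  then show ?case unfolding v_def by simp
qed

lemma lim_nonneg:
  assumes y: "y > 0" and lim: "(\<lambda>m. rG (f m)) \<longlonglongrightarrow> M" and pos: "\<And>m. f m > 0"
  shows "M \<ge> 0"
  by (rule LIMSEQ_le_const[OF lim]) (use rG_pos pos less_imp_le in blast)

lemma cross_prod:
  assumes y: "y > 0" and lim: "(\<lambda>m. rG ((H ^^ m) y)) \<longlonglongrightarrow> M"
  shows "(\<lambda>m. (G ^^ p) ((H ^^ m) y) / (H ^^ m) y) \<longlonglongrightarrow> M ^ p"
proof -
  have M0: "M \<ge> 0" by (rule lim_nonneg[OF y lim funpow_H_pos[OF y]])
  show ?thesis
  proof (cases "M > 0")
    case True
    have "(\<lambda>m. \<Prod>i<p. rG ((G ^^ i) ((H ^^ m) y))) \<longlonglongrightarrow> (\<Prod>i<p. M)"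
      by (rule tendsto_prod) (rule cross_lim[OF y lim True])
    then show ?thesis using ratio_formula[OF funpow_H_pos[OF y]] by simp
  next
    case False
    then have M: "M = 0" using M0 by simp
    show ?thesis
    proof (cases p)
      case 0
      have "(H ^^ m) y \<noteq> 0" for m using funpow_H_pos[OF y, of m] by simp
      then show ?thesis using 0 by simp
    next
      case (Suc p')
      have le: "(G ^^ p) ((H ^^ m) y) / (H ^^ m) y \<le> rG ((H ^^ m) y)" for m
      proof -
        have v: "(H ^^ m) y > 0" using funpow_H_pos[OF y] .
        have "(G ^^ p) ((H ^^ m) y) = (G ^^ p') (G ((H ^^ m) y))"
          unfolding Suc by (simp add: funpow_Suc_right del: funpow.simps)
        also have "\<dots> \<le> G ((H ^^ m) y)" by (rule funpow_G_le[OF Gpos[OF v]])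
        finally show ?thesis using v by (simp add: rG_def divide_right_mono)
      qed
      have ge: "0 \<le> (G ^^ p) ((H ^^ m) y) / (H ^^ m) y" for m
        using mixed_pos[OF y, of p m] funpow_H_pos[OF y, of m] by simp
      have "(\<lambda>m. (G ^^ p) ((H ^^ m) y) / (H ^^ m) y) \<longlonglongrightarrow> 0"
        by (rule tendsto_sandwich[of "\<lambda>_. 0" _ _ "\<lambda>m. rG ((H ^^ m) y)"])
           (use le ge lim M in auto)
      then show ?thesis using M Suc by simp
    qed
  qed
qed

lemma own_prod:
  assumes y: "y > 0" and lim: "(\<lambda>m. rG ((G ^^ m) y)) \<longlonglongrightarrow> L"
  shows "(\<lambda>m. (G ^^ p) ((G ^^ m) y) / (G ^^ m) y) \<longlonglongrightarrow> L ^ p"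
proof -
  have "(\<lambda>m. \<Prod>i<p. rG ((G ^^ (m + i)) y)) \<longlonglongrightarrow> (\<Prod>i<p. L)"
    by (rule tendsto_prod) (rule LIMSEQ_ignore_initial_segment[OF lim])
  moreover have "(G ^^ i) ((G ^^ m) y) = (G ^^ (m + i)) y" for i m
    by (simp add: funpow_add add.commute)
  ultimately show ?thesis using ratio_formula[OF funpow_G_pos[OF y]] by simp
qed

end

lemma pq_exists:
  fixes M A :: real
  assumes M0: "0 \<le> M" and MA: "M < A" and A1: "A \<le> 1"
  shows "\<exists>p q::nat. p \<ge> 1 \<and> q \<ge> 1 \<and> M ^ p < (1 - M) ^ q \<and> (1 - A) ^ q < A ^ p"
proof (cases "M = 0")
  case True
  show ?thesis
  proof (cases "A = 1")
    case True
    then show ?thesis using \<open>M = 0\<close> by (intro exI[of _ 1]) simp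
  next
    case False
    then have "1 - A < 1" "A > 0" using MA M0 A1 by auto
    then obtain q where q: "(1 - A) ^ q < A" using real_arch_pow_inv by blast
    have "q \<noteq> 0" using q A1 by (cases q) auto
    then show ?thesis using q \<open>M = 0\<close> by (intro exI[of _ 1] exI[of _ q]) auto
  qed
next
  case False
  then have Mpos: "M > 0" using M0 by simp
  show ?thesis
  proof (cases "A = 1")
    case True
    have "1 - M > 0" "M < 1" using MA True by auto
    then obtain p where p: "M ^ p < 1 - M" using real_arch_pow_inv by blast
    have "p \<noteq> 0" using p Mpos by (cases p) auto
    then show ?thesis using p True by (intro exI[of _ p] exI[of _ 1]) auto
  next
    case False
    then have A1': "A < 1" using A1 by simp
    define a0 where "a0 = - ln M"
    define b0 where "b0 = - ln (1 - M)"
    define a1 where "a1 = - ln A"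
    define b1 where "b1 = - ln (1 - A)"
    have a0: "a0 > 0" unfolding a0_def using Mpos MA A1' by simp
    have b0: "b0 > 0" unfolding b0_def using Mpos MA A1' by simp
    have a1: "a1 > 0" unfolding a1_def using Mpos MA A1' by simp
    have b1: "b1 > 0" unfolding b1_def using Mpos MA A1' by simp
    have a10: "a1 < a0" unfolding a0_def a1_def using Mpos MA by simp
    have b01: "b0 < b1" unfolding b0_def b1_def using Mpos MA A1' by simp
    define s where "s = a1 / b1"
    define t where "t = a0 / b0"
    have "a1 * b0 < a0 * b1" using a10 b01 a1 b0 by (intro mult_strict_mono) auto
    then have st: "s < t" unfolding s_def t_def using b0 b1 by (simp add: field_simps)
    have s0: "s > 0" unfolding s_def using a1 b1 by simp
    define p :: nat where "p = nat (ceiling (1 / (t - s))) + 1"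
    have p1: "real p > 1 / (t - s)" unfolding p_def by linarith
    then have pts: "real p * (t - s) > 1" using st by (simp add: field_simps)
    define q :: nat where "q = nat (floor (real p * s)) + 1"
    have q1: "real q > real p * s" unfolding q_def by linarith
    have ps0: "real p * s \<ge> 0" using s0 by simp
    have "real (nat (floor (real p * s))) = of_int (floor (real p * s))"
      using ps0 by simp
    then have q2: "real q \<le> real p * s + 1" unfolding q_def
      using of_int_floor_le[of "real p * s"] by simp
    have q3: "real q < real p * t" using q2 pts by (simp add: algebra_simps)
    have c1: "real q * b1 > real p * a1" using q1 b1 unfolding s_def by (simp add: field_simps)
    have c2: "real q * b0 < real p * a0" using q3 b0 unfolding t_def by (simp add: field_simps)
    have "ln (M ^ p) < ln ((1 - M) ^ q)"
      using c2 unfolding a0_def b0_def ln_realpow by simp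
    then have r1: "M ^ p < (1 - M) ^ q" using Mpos MA A1' by simp
    have "ln ((1 - A) ^ q) < ln (A ^ p)"
      using c1 unfolding a1_def b1_def ln_realpow by simp
    then have r2: "(1 - A) ^ q < A ^ p" using Mpos MA A1' by simp
    have "p \<ge> 1" "q \<ge> 1" unfolding p_def q_def by auto
    then show ?thesis using r1 r2 by blast
  qed
qed

lemma linear_g:
  fixes g :: "real \<Rightarrow> real"
  assumes maps: "\<And>x. x > 0 \<Longrightarrow> g x > 0"
    and cont: "continuous_on {0<..} g"
    and incr: "strict_mono_on {0<..} g"
    and below: "\<And>x. x > 0 \<Longrightarrow> g x < x"
    and comm: "\<forall>x>0. g (x - g x) = g x - g (g x)"
  shows "\<exists>A. 0 < A \<and> A < 1 \<and> (\<forall>x>0. g x = A * x)"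
proof -
  define h where "h = (\<lambda>x. x - g x)"
  interpret gh: cpair g h
    by unfold_locales (use maps below comm in \<open>auto simp: h_def\<close>)
  interpret hg: cpair h g by (rule gh.swap)
  have hgr: "hg.rG y = 1 - gh.rG y" if "y > 0" for y
    using that unfolding hg.rG_def gh.rG_def by (simp add: h_def field_simps)
  have gj_mono: "(g ^^ j) x < (g ^^ j) y" if "0 < x" "x < y" for j x y
  proof (induction j)
    case 0 then show ?case using that by simp
  next
    case (Suc j)
    have "(g ^^ j) x > 0" "(g ^^ j) y > 0" using gh.funpow_G_pos that by auto
    then show ?case using Suc incr by (simp add: strict_mono_on_def)
  qed
  define Lf where "Lf x = lim (\<lambda>j. gh.rG ((g ^^ j) x))" for x
  have Lconv: "(\<lambda>j. gh.rG ((g ^^ j) x)) \<longlonglongrightarrow> Lf x \<and> (\<forall>j. gh.rG ((g ^^ j) x) \<le> Lf x)"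
    if x: "x > 0" for x
  proof -
    obtain L where L: "(\<lambda>j. gh.rG ((g ^^ j) x)) \<longlonglongrightarrow> L" "\<forall>j. gh.rG ((g ^^ j) x) \<le> L"
      using incseq_convergent[OF gh.rG_incseq[OF x], of 1] gh.rG_less1 gh.funpow_G_pos[OF x]
      by (metis less_imp_le)
    then show ?thesis unfolding Lf_def using limI by metis
  qed
  have Lle1: "Lf x \<le> 1" if "x > 0" for x
    by (rule LIMSEQ_le_const2[OF conjunct1[OF Lconv[OF that]]])
       (use gh.rG_less1 gh.funpow_G_pos[OF that] less_imp_le in blast)
  have Lpos: "Lf x > 0" if "x > 0" for x
  proof -
    have "gh.rG ((g ^^ 0) x) \<le> Lf x" using Lconv[OF that] by blast
    then show ?thesis using gh.rG_pos[OF that] by simp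
  qed
  have Lshift: "Lf ((g ^^ k) x) = Lf x" if x: "x > 0" for k x
  proof -
    have "(\<lambda>j. gh.rG ((g ^^ (j + k)) x)) \<longlonglongrightarrow> Lf x"
      using LIMSEQ_ignore_initial_segment[OF conjunct1[OF Lconv[OF x]]] .
    moreover have "(g ^^ j) ((g ^^ k) x) = (g ^^ (j + k)) x" for j by (simp add: funpow_add)
    ultimately have "(\<lambda>j. gh.rG ((g ^^ j) ((g ^^ k) x))) \<longlonglongrightarrow> Lf x" by simp
    then show ?thesis using conjunct1[OF Lconv[OF gh.funpow_G_pos[OF x]]] LIMSEQ_unique by blast
  qed
  have Lmono: "Lf x \<le> Lf y" if x: "0 < x" and xy: "x < y" for x y
  proof (rule ccontr)
    assume "\<not> ?thesis"
    then have lt: "Lf y < Lf x" by simp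
    have y: "y > 0" using x xy by simp
    define lam where "lam = (Lf x + Lf y) / 2"
    have lam1: "Lf y < lam" "lam < Lf x" unfolding lam_def using lt by auto
    have Ly: "Lf y > 0" using Lpos[OF y] .
    obtain N where N: "\<And>j. j \<ge> N \<Longrightarrow> gh.rG ((g ^^ j) x) > lam"
      using order_tendstoD(1)[OF conjunct1[OF Lconv[OF x]] lam1(2)]
      unfolding eventually_sequentially by blast
    define R where "R j = (g ^^ j) x / (g ^^ j) y" for j
    define c where "c = lam / Lf y"
    have c1: "c > 1" unfolding c_def using lam1 Ly by simp
    have Rpos: "R j > 0" for j unfolding R_def using gh.funpow_G_pos x y by simp
    have Rlt: "R j < 1" for j unfolding R_def using gj_mono[OF x xy] gh.funpow_G_pos[OF y] by simp
    have Rgrow: "R (N + k) \<ge> R N * c ^ k" for k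
    proof (induction k)
      case 0 then show ?case by simp
    next
      case (Suc k)
      define u where "u = (g ^^ (N + k)) x"
      define v where "v = (g ^^ (N + k)) y"
      have u: "u > 0" and v: "v > 0" unfolding u_def v_def using gh.funpow_G_pos x y by auto
      have ru: "gh.rG u > lam" unfolding u_def using N by simp
      have rv: "gh.rG v \<le> Lf y" "gh.rG v > 0" unfolding v_def using Lconv[OF y] gh.rG_pos gh.funpow_G_pos[OF y] by auto
      have "R (N + Suc k) = (gh.rG u * u) / (gh.rG v * v)"
        unfolding R_def u_def v_def using gh.G_eq gh.funpow_G_pos x y by simp
      also have "\<dots> = R (N + k) * (gh.rG u / gh.rG v)"
        unfolding R_def u_def v_def by (simp add: field_simps)
      finally have e: "R (N + Suc k) = R (N + k) * (gh.rG u / gh.rG v)" .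
      have cle: "c \<le> gh.rG u / gh.rG v"
        unfolding c_def using ru rv Ly lam1 
        by (simp add: frac_le less_imp_le)
      moreover have "c > 0" using c1 by simp
      have "R (N + k) * c \<le> R (N + k) * (gh.rG u / gh.rG v)"
        by (rule mult_left_mono[OF cle less_imp_le[OF Rpos]])
      moreover have "R N * c ^ Suc k \<le> R (N + k) * c" using Suc.IH \<open>c > 0\<close> by simp
      ultimately show ?case using e by simp
    qed
    obtain n where n: "1 / R N < c ^ n" using real_arch_pow[OF c1] by blast
    then have "1 < R N * c ^ n" using Rpos[of N] by (simp add: field_simps)
    then show False using Rgrow[of n] Rlt[of "N + n"] by simp
  qed
  have small: "\<exists>j. (g ^^ j) x < z" if x: "x > 0" and z: "z > 0" for x z
  proof (rule ccontr)
    assume "\<not> ?thesis"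
    then have ge: "\<forall>j. z \<le> (g ^^ j) x" by (simp add: not_less)
    have dec: "decseq (\<lambda>j. (g ^^ j) x)"
      by (rule decseq_SucI) (simp add: less_imp_le[OF gh.G_less[OF gh.funpow_G_pos[OF x]]])
    obtain l where l: "(\<lambda>j. (g ^^ j) x) \<longlonglongrightarrow> l" "\<forall>j. l \<le> (g ^^ j) x"
      using decseq_convergent[OF dec ge] by blast
    have lz: "l \<ge> z" using LIMSEQ_le_const[OF l(1)] ge by blast
    then have l0: "l > 0" using z by simp
    have "(\<lambda>j. g ((g ^^ j) x)) \<longlonglongrightarrow> g l"
      by (rule continuous_on_tendsto_compose[OF cont l(1)])
         (use l0 gh.funpow_G_pos[OF x] in auto)
    moreover have "(\<lambda>j. g ((g ^^ j) x)) \<longlonglongrightarrow> l"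
      using LIMSEQ_Suc[OF l(1)] by simp
    ultimately have "g l = l" using LIMSEQ_unique by blast
    then show False using below[OF l0] by simp
  qed
  define A where "A = Lf 1"
  have LA: "Lf x = A" if x: "x > 0" for x
  proof (cases "x \<le> 1")
    case True
    obtain j where j: "(g ^^ j) 1 < x" using small[OF zero_less_one x] by blast
    have "Lf 1 = Lf ((g ^^ j) 1)" using Lshift[of 1 j] by simp
    also have "\<dots> \<le> Lf x" using Lmono[OF gh.funpow_G_pos j] by simp
    finally have a: "A \<le> Lf x" unfolding A_def .
    have "Lf x \<le> A" unfolding A_def using True Lmono[OF x] by (cases "x = 1") auto
    then show ?thesis using a by simp
  next
    case False
    obtain j where j: "(g ^^ j) x < 1" using small[OF x zero_less_one] by blast
    have "Lf x = Lf ((g ^^ j) x)" using Lshift[OF x, of j] by simp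
    also have "\<dots> \<le> A" unfolding A_def using Lmono[OF gh.funpow_G_pos[OF x] j] by simp
    finally have a: "Lf x \<le> A" .
    have "A \<le> Lf x" unfolding A_def using False Lmono[of 1 x] by simp
    then show ?thesis using a by simp
  qed
  have A1: "A \<le> 1" using Lle1[of 1] unfolding A_def by simp
  have Nconv: "\<exists>N. (\<lambda>m. hg.rG ((h ^^ m) x)) \<longlonglongrightarrow> N \<and> hg.rG x \<le> N" if x: "x > 0" for x
  proof -
    obtain N where N: "(\<lambda>m. hg.rG ((h ^^ m) x)) \<longlonglongrightarrow> N" "\<forall>m. hg.rG ((h ^^ m) x) \<le> N"
      using incseq_convergent[OF hg.rG_incseq[OF x], of 1] hg.rG_less1 hg.funpow_G_pos[OF x]
      by (metis less_imp_le)
    have "hg.rG ((h ^^ 0) x) \<le> N" using N(2) by blast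
    then show ?thesis using N(1) by auto
  qed
  have key: "A \<le> gh.rG x" if x: "x > 0" for x
  proof -
    obtain N where N: "(\<lambda>m. hg.rG ((h ^^ m) x)) \<longlonglongrightarrow> N" "hg.rG x \<le> N"
      using Nconv[OF x] by blast
    define M where "M = 1 - N"
    have Mle: "M \<le> gh.rG x" using N(2) hgr[OF x] unfolding M_def by simp
    have limM: "(\<lambda>m. gh.rG ((h ^^ m) x)) \<longlonglongrightarrow> M"
    proof -
      have "(\<lambda>m. 1 - hg.rG ((h ^^ m) x)) \<longlonglongrightarrow> 1 - N" by (intro tendsto_intros N(1))
      moreover have "1 - hg.rG ((h ^^ m) x) = gh.rG ((h ^^ m) x)" for m
        using hgr[OF hg.funpow_G_pos[OF x]] by simp
      ultimately show ?thesis unfolding M_def by simp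
    qed
    have M0: "M \<ge> 0" by (rule gh.lim_nonneg[OF x limM gh.funpow_H_pos[OF x]])
    show ?thesis
    proof (rule ccontr)
      assume "\<not> ?thesis"
      then have MA: "M < A" using Mle by simp
      obtain p q :: nat where pq: "p \<ge> 1" "q \<ge> 1" "M ^ p < (1 - M) ^ q" "(1 - A) ^ q < A ^ p"
        using pq_exists[OF M0 MA A1] by blast
      have al: "(\<lambda>m. (g ^^ p) ((h ^^ m) x) / (h ^^ m) x) \<longlonglongrightarrow> M ^ p"
        by (rule gh.cross_prod[OF x limM])
      have "(\<lambda>m. hg.rG ((h ^^ m) x)) \<longlonglongrightarrow> 1 - M" using N(1) unfolding M_def by simp
      then have be: "(\<lambda>m. (h ^^ q) ((h ^^ m) x) / (h ^^ m) x) \<longlonglongrightarrow> (1 - M) ^ q"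
        by (rule hg.own_prod[OF x])
      have "(\<lambda>m. (g ^^ p) ((h ^^ m) x) / (h ^^ m) x - (h ^^ q) ((h ^^ m) x) / (h ^^ m) x)
          \<longlonglongrightarrow> M ^ p - (1 - M) ^ q" by (intro tendsto_intros al be)
      moreover have "M ^ p - (1 - M) ^ q < 0" using pq by simp
      ultimately have "eventually (\<lambda>m. (g ^^ p) ((h ^^ m) x) / (h ^^ m) x - (h ^^ q) ((h ^^ m) x) / (h ^^ m) x < 0) sequentially"
        by (rule order_tendstoD(2))
      then obtain m0 where
        m0: "(g ^^ p) ((h ^^ m0) x) / (h ^^ m0) x - (h ^^ q) ((h ^^ m0) x) / (h ^^ m0) x < 0"
        unfolding eventually_sequentially by blast
      define z where "z = (h ^^ m0) x"
      have z: "z > 0" unfolding z_def using gh.funpow_H_pos[OF x] .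
      have QP: "(g ^^ p) z < (h ^^ q) z"
        using m0 z unfolding z_def[symmetric] by (simp add: diff_divide_distrib[symmetric] divide_less_0_iff)
      have limA: "(\<lambda>j. gh.rG ((g ^^ j) z)) \<longlonglongrightarrow> A" using Lconv[OF z] LA[OF z] by simp
      have ga: "(\<lambda>j. (g ^^ p) ((g ^^ j) z) / (g ^^ j) z) \<longlonglongrightarrow> A ^ p"
        by (rule gh.own_prod[OF z limA])
      have "(\<lambda>j. 1 - gh.rG ((g ^^ j) z)) \<longlonglongrightarrow> 1 - A" by (intro tendsto_intros limA)
      moreover have "1 - gh.rG ((g ^^ j) z) = hg.rG ((g ^^ j) z)" for j
        using hgr[OF gh.funpow_G_pos[OF z]] by simp
      ultimately have "(\<lambda>j. hg.rG ((g ^^ j) z)) \<longlonglongrightarrow> 1 - A" by simp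
      then have de: "(\<lambda>j. (h ^^ q) ((g ^^ j) z) / (g ^^ j) z) \<longlonglongrightarrow> (1 - A) ^ q"
        by (rule hg.cross_prod[OF z])
      have "(\<lambda>j. (g ^^ p) ((g ^^ j) z) / (g ^^ j) z - (h ^^ q) ((g ^^ j) z) / (g ^^ j) z)
          \<longlonglongrightarrow> A ^ p - (1 - A) ^ q" by (intro tendsto_intros ga de)
      moreover have "A ^ p - (1 - A) ^ q > 0" using pq by simp
      ultimately have "eventually (\<lambda>j. (g ^^ p) ((g ^^ j) z) / (g ^^ j) z - (h ^^ q) ((g ^^ j) z) / (g ^^ j) z > 0) sequentially"
        by (rule order_tendstoD(1))
      then obtain j where
        j: "(g ^^ p) ((g ^^ j) z) / (g ^^ j) z - (h ^^ q) ((g ^^ j) z) / (g ^^ j) z > 0"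
        unfolding eventually_sequentially by blast
      have gjz: "(g ^^ j) z > 0" using gh.funpow_G_pos[OF z] .
      have "(h ^^ q) ((g ^^ j) z) < (g ^^ p) ((g ^^ j) z)"
        using j gjz by (simp add: diff_divide_distrib[symmetric] zero_less_divide_iff)
      moreover have "(g ^^ p) ((g ^^ j) z) = (g ^^ j) ((g ^^ p) z)"
      proof -
        have "(g ^^ p) ((g ^^ j) z) = (g ^^ (p + j)) z" by (simp add: funpow_add)
        moreover have "(g ^^ j) ((g ^^ p) z) = (g ^^ (j + p)) z" by (simp add: funpow_add)
        ultimately show ?thesis by (simp add: add.commute)
      qed
      moreover have "(h ^^ q) ((g ^^ j) z) = (g ^^ j) ((h ^^ q) z)"
        using gh.funpow_comm[OF z, of j q] by simp
      moreover have "(g ^^ j) ((g ^^ p) z) < (g ^^ j) ((h ^^ q) z)"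
        by (rule gj_mono[OF gh.funpow_G_pos[OF z] QP])
      ultimately show False by simp
    qed
  qed
  have rA: "gh.rG x = A" if x: "x > 0" for x
  proof -
    have "gh.rG ((g ^^ 0) x) \<le> Lf x" using Lconv[OF x] by blast
    then show ?thesis using key[OF x] LA[OF x] by simp
  qed
  show ?thesis
  proof (intro exI[of _ A] conjI allI impI)
    show "0 < A" using rA[of 1] gh.rG_pos[of 1] by simp
    show "A < 1" using rA[of 1] gh.rG_less1[of 1] by simp
    fix x :: real assume "x > 0"
    then show "g x = A * x" using rA[of x] gh.G_eq[of x] by simp
  qed
qed

theorem mainTheorem7:
  fixes g :: "real \<Rightarrow> real"
  assumes maps: "\<And>x. x > 0 \<Longrightarrow> g x > 0"
    and cont: "continuous_on {0<..} g"
    and incr: "strict_mono_on {0<..} g"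
    and below: "\<And>x. x > 0 \<Longrightarrow> g x < x"
  shows "(common_abel_function g (\<lambda>x. x - g x) \<longleftrightarrow>
            (\<forall>x>0. g (x - g x) = g x - g (g x))) \<and>
         ((\<forall>x>0. g (x - g x) = g x - g (g x)) \<longleftrightarrow>
            (\<forall>x>0. g x = g (x - g x) + g (g x)))"
proof (intro conjI iffI)
  assume "\<forall>x>0. g (x - g x) = g x - g (g x)"
  then show "\<forall>x>0. g x = g (x - g x) + g (g x)" by auto
next
  assume "\<forall>x>0. g x = g (x - g x) + g (g x)"
  then show "\<forall>x>0. g (x - g x) = g x - g (g x)" by auto
next
  assume "common_abel_function g (\<lambda>x. x - g x)"
  then obtain \<alpha> \<beta> c d where hom: "homeomorphism {0<..} (UNIV :: real set) \<alpha> \<beta>"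
    and ac: "\<forall>x>0. \<alpha> (g x) = \<alpha> x + c" and ad: "\<forall>x>0. \<alpha> (x - g x) = \<alpha> x + d"
    unfolding common_abel_function_def abel_function_def by blast
  have inv: "\<beta> (\<alpha> x) = x" if "x > 0" for x
    using hom that unfolding homeomorphism_def by auto
  show "\<forall>x>0. g (x - g x) = g x - g (g x)"
  proof (intro allI impI)
    fix x :: real assume x: "x > 0"
    have gx: "g x > 0" using maps[OF x] .
    have p1: "x - g x > 0" using below[OF x] by simp
    have p2: "g x - g (g x) > 0" using below[OF gx] by simp
    have "\<alpha> (g (x - g x)) = \<alpha> x + d + c" using ac p1 ad x by simp
    moreover have "\<alpha> (g x - g (g x)) = \<alpha> x + c + d" using ad gx ac x by simp
    ultimately have "\<alpha> (g (x - g x)) = \<alpha> (g x - g (g x))" by simp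
    then have "\<beta> (\<alpha> (g (x - g x))) = \<beta> (\<alpha> (g x - g (g x)))" by simp
    then show "g (x - g x) = g x - g (g x)" using inv[OF maps[OF p1]] inv[OF p2] by simp
  qed
next
  assume comm: "\<forall>x>0. g (x - g x) = g x - g (g x)"
  obtain A where A: "0 < A" "A < 1" "\<forall>x>0. g x = A * x"
    using linear_g[OF maps cont incr below comm] by blast
  have hom: "homeomorphism {0<..} (UNIV :: real set) ln exp"
    unfolding homeomorphism_def
  proof (intro conjI)
    have "y \<in> ln ` {0<..}" for y :: real by (rule image_eqI[of _ _ "exp y"]) auto
    then show "ln ` {0<..} = (UNIV :: real set)" by blast
    have "y \<in> exp ` UNIV" if "y > 0" for y :: real
      using that by (intro image_eqI[of _ _ "ln y"]) auto
    then show "exp ` (UNIV :: real set) = {0<..}" by auto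
    show "continuous_on {0<..} (ln :: real \<Rightarrow> real)"
      by (intro continuous_intros) auto
    show "continuous_on UNIV (exp :: real \<Rightarrow> real)" by (intro continuous_intros)
  qed auto
  have "abel_function ln g"
    unfolding abel_function_def
    using hom A by (auto intro!: exI[of _ "ln A"] simp: ln_mult)
  moreover have "abel_function ln (\<lambda>x. x - g x)"
  proof -
    have "x - g x = (1 - A) * x" if "x > 0" for x using A that by (simp add: algebra_simps)
    then show ?thesis
      unfolding abel_function_def
      using hom A by (auto intro!: exI[of _ "ln (1 - A)"] simp: ln_mult)
  qed
  ultimately show "common_abel_function g (\<lambda>x. x - g x)"
    unfolding common_abel_function_def by blast
qed

end
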